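(* Let $\mathbb{T}$ be a finite time scale and $a\in\mathbb{T}$ such that exactly $m$ elements of $\mathbb{T}$ are larger than $a$ and exactly $r$ elements are smaller than $a$, where $m\geq1$, $r\geq0$ and $r+m\geq2$; thus $\mathbb{T}$ has $n=m+r+1$ elements. Let $\alpha=\min\mathbb{T}$, $\beta=\rho(\max\mathbb{T})$ (the second largest element of $\mathbb{T}$), let $q$ be real-valued, and consider the boundary value problem $$-y^{\Delta\Delta}(t)+q(t)\,y(a)=\lambda\, y^{\sigma}(t),\quad t\in\mathbb{T}^{\kappa^{2}},\qquad U(y)=0,\quad V(y)=0,$$ where $U(y)=a_{11}y(\alpha)+a_{12}y^{\Delta}(\alpha)+a_{21}y(\beta)+a_{22}y^{\Delta}(\beta)$ and $V(y)=b_{11}y(\alpha)+b_{12}y^{\Delta}(\alpha)+b_{21}y(\beta)+b_{22}y^{\Delta}(\beta)$ with real coefficients $a_{ij},b_{ij}$. Let $$A=\begin{pmatrix}a_{11}\mu(\alpha)-a_{12} & b_{11}\mu(\alpha)-b_{12}\\ a_{22} & b_{22}\end{pmatrix}.$$ If $\det A\neq0$, the problem has exactly $n-2$ eigenvalues counted with multiplicities; otherwise the number of eigenvalues counted with multiplicities is less than $n-2$.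
   Context: For a time scale $\mathbb{T}$, $\sigma$, $\rho$ are the forward and backward jump operators, $\mu(t)=\sigma(t)-t$, $y^{\sigma}=y\circ\sigma$, $y^{\Delta}$, $y^{\Delta\Delta}$ are the delta derivatives (on a finite time scale $y^{\Delta}(t)=(y(\sigma(t))-y(t))/\mu(t)$), $\mathbb{T}^{\kappa}$ is $\mathbb{T}$ with its largest element removed and $\mathbb{T}^{\kappa^2}=(\mathbb{T}^{\kappa})^{\kappa}$. An eigenvalue is a $\lambda\in\mathbb{C}$ for which the problem has a nontrivial solution. Let $S(t,\lambda)$, $C(t,\lambda)$ be the solutions of the equation with $S(a,\lambda)=0$, $S^{\Delta}(a,\lambda)=1$, $C(a,\lambda)=1$, $C^{\Delta}(a,\lambda)=0$ and $\Delta(\lambda)=U(C)V(S)-V(C)U(S)$; on a finite time scale $\Delta(\lambda)$ is a polynomial in $\lambda$ whose zeros are exactly the eigenvalues, and the multiplicity of an eigenvalue is its multiplicity as a zero of $\Delta$. *)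

theory Defs
  imports "HOL-Computational_Algebra.Polynomial"
begin

text \<open>A finite time scale is modelled as a finite nonempty set T of reals.
  Functions on T are total functions real => complex whose values off T are irrelevant.\<close>

definition ts_sigma :: "real set \<Rightarrow> real \<Rightarrow> real" where
  "ts_sigma T t = (if \<exists>s\<in>T. s > t then Min {s\<in>T. s > t} else t)"

definition ts_rho :: "real set \<Rightarrow> real \<Rightarrow> real" where
  "ts_rho T t = (if \<exists>s\<in>T. s < t then Max {s\<in>T. s < t} else t)"

definition ts_mu :: "real set \<Rightarrow> real \<Rightarrow> real" where
  "ts_mu T t = ts_sigma T t - t"

definition ts_delta :: "real set \<Rightarrow> (real \<Rightarrow> complex) \<Rightarrow> real \<Rightarrow> complex" where
  "ts_delta T y t = (y (ts_sigma T t) - y t) / complex_of_real (ts_mu T t)"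

definition ts_kappa :: "real set \<Rightarrow> real set" where
  "ts_kappa T = T - {Max T}"

definition is_sol :: "real set \<Rightarrow> real \<Rightarrow> (real \<Rightarrow> real) \<Rightarrow> complex \<Rightarrow> (real \<Rightarrow> complex) \<Rightarrow> bool" where
  "is_sol T a q lam y \<longleftrightarrow>
     (\<forall>t\<in>ts_kappa (ts_kappa T).
        - ts_delta T (ts_delta T y) t + complex_of_real (q t) * y a = lam * y (ts_sigma T t))"

definition bform :: "real set \<Rightarrow> real \<Rightarrow> real \<Rightarrow> real \<Rightarrow> real \<Rightarrow> (real \<Rightarrow> complex) \<Rightarrow> complex" where
  "bform T c11 c12 c21 c22 y =
     (let al = Min T; be = ts_rho T (Max T) in
      complex_of_real c11 * y al + complex_of_real c12 * ts_delta T y al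
      + complex_of_real c21 * y be + complex_of_real c22 * ts_delta T y be)"

definition solS :: "real set \<Rightarrow> real \<Rightarrow> (real \<Rightarrow> real) \<Rightarrow> complex \<Rightarrow> real \<Rightarrow> complex" where
  "solS T a q lam = (THE y. is_sol T a q lam y \<and> y a = 0 \<and> ts_delta T y a = 1
                          \<and> (\<forall>t. t \<notin> T \<longrightarrow> y t = 0))"

definition solC :: "real set \<Rightarrow> real \<Rightarrow> (real \<Rightarrow> real) \<Rightarrow> complex \<Rightarrow> real \<Rightarrow> complex" where
  "solC T a q lam = (THE y. is_sol T a q lam y \<and> y a = 1 \<and> ts_delta T y a = 0
                          \<and> (\<forall>t. t \<notin> T \<longrightarrow> y t = 0))"

definition char_fun ::
  "real set \<Rightarrow> real \<Rightarrow> (real \<Rightarrow> real) \<Rightarrow> real \<Rightarrow> real \<Rightarrow> real \<Rightarrow> real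
   \<Rightarrow> real \<Rightarrow> real \<Rightarrow> real \<Rightarrow> real \<Rightarrow> complex \<Rightarrow> complex" where
  "char_fun T a q a11 a12 a21 a22 b11 b12 b21 b22 lam =
     bform T a11 a12 a21 a22 (solC T a q lam) * bform T b11 b12 b21 b22 (solS T a q lam)
   - bform T b11 b12 b21 b22 (solC T a q lam) * bform T a11 a12 a21 a22 (solS T a q lam)"

definition char_poly ::
  "real set \<Rightarrow> real \<Rightarrow> (real \<Rightarrow> real) \<Rightarrow> real \<Rightarrow> real \<Rightarrow> real \<Rightarrow> real
   \<Rightarrow> real \<Rightarrow> real \<Rightarrow> real \<Rightarrow> real \<Rightarrow> complex poly" where
  "char_poly T a q a11 a12 a21 a22 b11 b12 b21 b22 =
     (THE p. \<forall>lam. poly p lam = char_fun T a q a11 a12 a21 a22 b11 b12 b21 b22 lam)"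

definition is_eigenvalue ::
  "real set \<Rightarrow> real \<Rightarrow> (real \<Rightarrow> real) \<Rightarrow> real \<Rightarrow> real \<Rightarrow> real \<Rightarrow> real
   \<Rightarrow> real \<Rightarrow> real \<Rightarrow> real \<Rightarrow> real \<Rightarrow> complex \<Rightarrow> bool" where
  "is_eigenvalue T a q a11 a12 a21 a22 b11 b12 b21 b22 lam \<longleftrightarrow>
     (\<exists>y. (\<exists>t\<in>T. y t \<noteq> 0) \<and> is_sol T a q lam y
          \<and> bform T a11 a12 a21 a22 y = 0 \<and> bform T b11 b12 b21 b22 y = 0)"

definition eig_mult ::
  "real set \<Rightarrow> real \<Rightarrow> (real \<Rightarrow> real) \<Rightarrow> real \<Rightarrow> real \<Rightarrow> real \<Rightarrow> real
   \<Rightarrow> real \<Rightarrow> real \<Rightarrow> real \<Rightarrow> real \<Rightarrow> complex \<Rightarrow> nat" where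
  "eig_mult T a q a11 a12 a21 a22 b11 b12 b21 b22 lam =
     order lam (char_poly T a q a11 a12 a21 a22 b11 b12 b21 b22)"

end

theory Submission
  imports Defs "HOL-Computational_Algebra.Fundamental_Theorem_Algebra"
begin

definition tsn :: "real set \<Rightarrow> nat \<Rightarrow> real" where
  "tsn T k = sorted_list_of_set T ! k"

lemma tsn_mono:
  assumes "finite T" "i < j" "j < card T"
  shows "tsn T i < tsn T j"
  using sorted_wrt_nth_less[OF strict_sorted_list_of_set[of T], of i j] assms
  by (simp add: tsn_def)

lemma tsn_less_iff:
  assumes "finite T" "i < card T" "j < card T"
  shows "tsn T i < tsn T j \<longleftrightarrow> i < j"
  using tsn_mono[OF assms(1)] assms
  by (metis less_asym' linorder_neqE_nat)

lemma tsn_inj: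
  assumes "finite T" "i < card T" "j < card T"
  shows "tsn T i = tsn T j \<longleftrightarrow> i = j"
  using tsn_less_iff[OF assms] tsn_less_iff[OF assms(1,3,2)] by (metis less_irrefl linorder_neqE_linordered_idom linorder_neqE_nat)

lemma tsn_in:
  assumes "finite T" "k < card T"
  shows "tsn T k \<in> T"
  using assms by (metis length_sorted_list_of_set nth_mem set_sorted_list_of_set tsn_def)

lemma tsn_surj:
  assumes "finite T" "s \<in> T"
  shows "\<exists>k<card T. s = tsn T k"
  using assms by (metis in_set_conv_nth length_sorted_list_of_set set_sorted_list_of_set tsn_def)

lemma T_eq: "finite T \<Longrightarrow> T = tsn T ` {..<card T}"
  using tsn_in tsn_surj by fastforce

lemma tsn_sigma:
  assumes "finite T" "k + 1 < card T"
  shows "ts_sigma T (tsn T k) = tsn T (k+1)"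
proof -
  have A: "{s\<in>T. s > tsn T k} = tsn T ` {k<..<card T}"
  proof
    show "{s \<in> T. tsn T k < s} \<subseteq> tsn T ` {k<..<card T}"
      using tsn_surj[OF assms(1)] tsn_less_iff[OF assms(1)] assms by fastforce
    show "tsn T ` {k<..<card T} \<subseteq> {s \<in> T. tsn T k < s}"
      using tsn_in[OF assms(1)] tsn_mono[OF assms(1)] by auto
  qed
  have B: "Min (tsn T ` {k<..<card T}) = tsn T (k+1)"
  proof (rule Min_eqI)
    show "tsn T (k+1) \<in> tsn T ` {k<..<card T}" using assms by auto
    fix y assume "y \<in> tsn T ` {k<..<card T}"
    then obtain j where "k < j" "j < card T" "y = tsn T j" by auto
    then show "tsn T (k+1) \<le> y"
      using tsn_mono[OF assms(1), of "k+1" j] by (cases "j = k+1") auto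
  qed auto
  have "\<exists>s\<in>T. s > tsn T k" using assms tsn_in tsn_mono by (meson less_add_one)
  then show ?thesis unfolding ts_sigma_def A B by simp
qed

lemma tsn_Min:
  assumes "finite T" "T \<noteq> {}"
  shows "Min T = tsn T 0"
proof (rule Min_eqI)
  have "card T > 0" using assms by (simp add: card_gt_0_iff)
  then show "tsn T 0 \<in> T" using tsn_in assms by auto
  fix y assume "y \<in> T"
  then obtain j where "j < card T" "y = tsn T j" using tsn_surj assms by blast
  then show "tsn T 0 \<le> y" using tsn_mono[OF assms(1), of 0 j] by (cases j) auto
qed (use assms in auto)

lemma tsn_Max_gen:
  assumes "finite T" "p < card T" "S = tsn T ` {..<Suc p}"
  shows "Max S = tsn T p"
proof (rule Max_eqI)
  show "tsn T p \<in> S" using assms by auto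
  fix y assume "y \<in> S"
  then obtain j where "j < Suc p" "y = tsn T j" using assms by auto
  then show "y \<le> tsn T p" using tsn_mono[OF assms(1), of j p] assms by (cases "j = p") auto
qed (use assms in auto)

lemma tsn_Max:
  assumes "finite T" "card T = Suc p"
  shows "Max T = tsn T p"
  using tsn_Max_gen[OF assms(1), of p T] T_eq[OF assms(1)] assms(2) by simp

lemma tsn_rho:
  assumes "finite T" "card T = Suc (Suc p)"
  shows "ts_rho T (tsn T (Suc p)) = tsn T p"
proof -
  have A: "{s\<in>T. s < tsn T (Suc p)} = tsn T ` {..<Suc p}"
  proof
    show "{s \<in> T. s < tsn T (Suc p)} \<subseteq> tsn T ` {..<Suc p}"
      using tsn_surj[OF assms(1)] tsn_less_iff[OF assms(1)] assms by fastforce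
    show "tsn T ` {..<Suc p} \<subseteq> {s \<in> T. s < tsn T (Suc p)}"
      using tsn_in[OF assms(1)] tsn_mono[OF assms(1)] assms by auto
  qed
  have "\<exists>s\<in>T. s < tsn T (Suc p)" using assms tsn_in tsn_mono
    by (metis lessI zero_less_Suc)
  then show ?thesis unfolding ts_rho_def A using tsn_Max_gen[OF assms(1), of p] assms
    by simp
qed

lemma tsn_kappa2:
  assumes "finite T" "card T = Suc (Suc p)"
  shows "ts_kappa (ts_kappa T) = tsn T ` {..<p}"
proof -
  have "ts_kappa T = tsn T ` {..<Suc p}"
  proof -
    have "T = tsn T ` {..<Suc (Suc p)}" using T_eq[OF assms(1)] assms(2) by simp
    also have "\<dots> = insert (tsn T (Suc p)) (tsn T ` {..<Suc p})" by (simp add: lessThan_Suc)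
    finally have "T - {tsn T (Suc p)} = tsn T ` {..<Suc p}"
      using tsn_inj[OF assms(1)] assms by auto
    then show ?thesis unfolding ts_kappa_def using tsn_Max[OF assms] by simp
  qed
  moreover have "Max (tsn T ` {..<Suc p}) = tsn T p"
    using tsn_Max_gen[OF assms(1), of p] assms by simp
  moreover have "tsn T ` {..<Suc p} - {tsn T p} = tsn T ` {..<p}"
    using tsn_inj[OF assms(1)] assms by (auto simp: lessThan_Suc)
  ultimately show ?thesis unfolding ts_kappa_def by simp
qed

lemma coeff_lin_mult_Suc:
  "coeff ([:a, b:] * p) (Suc e) = a * coeff p (Suc e) + b * coeff p e"
  by (simp add: mult_pCons_left)

lemma degree_lin_mult_le:
  "degree ([:a, b:] * (p::'a::comm_ring_1 poly)) \<le> degree p + 1"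
proof -
  have "degree ([:a, b:] * p) \<le> degree [:a, b:] + degree p" by (rule degree_mult_le)
  moreover have "degree [:a, b:] \<le> 1" by simp
  ultimately show ?thesis by linarith
qed

lemma deg_rec:
  fixes w g :: "nat \<Rightarrow> complex poly"
  assumes rec: "\<And>k. k < K \<Longrightarrow> w (k+2) = [:al k, be k:] * w (k+1) - smult (c k) (w k) + g k"
    and w0: "degree (w 0) \<le> d" and w1: "degree (w 1) \<le> d"
    and g: "\<And>k. k < K \<Longrightarrow> degree (g k) \<le> d + k"
  shows "k \<le> K \<Longrightarrow> degree (w (k+1)) \<le> d + k \<and> coeff (w (k+1)) (d+k) = coeff (w 1) d * (\<Prod>i<k. be i)"
proof -
  have "k \<le> K \<Longrightarrow> degree (w k) \<le> d + k \<and> degree (w (k+1)) \<le> d + k \<and>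
        coeff (w (k+1)) (d+k) = coeff (w 1) d * (\<Prod>i<k. be i)"
  proof (induction k)
    case 0
    then show ?case using w0 w1 by simp
  next
    case (Suc k)
    then have IH: "degree (w k) \<le> d + k" "degree (w (k+1)) \<le> d + k"
        "coeff (w (k+1)) (d+k) = coeff (w 1) d * (\<Prod>i<k. be i)" and kK: "k < K" by auto
    have eq: "w (Suc k + 1) = [:al k, be k:] * w (k+1) - smult (c k) (w k) + g k"
      using rec[OF kK] by simp
    have d1: "degree ([:al k, be k:] * w (k+1)) \<le> d + Suc k"
      using degree_lin_mult_le[of "al k" "be k" "w (k+1)"] IH(2) by linarith
    have d2: "degree (smult (c k) (w k)) \<le> d + Suc k"
      using degree_smult_le[of "c k" "w k"] IH(1) by linarith
    have d3: "degree (g k) \<le> d + Suc k" using g[OF kK] by linarith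
    have deg: "degree (w (Suc k + 1)) \<le> d + Suc k"
      unfolding eq by (intro degree_add_le degree_diff_le d1 d2 d3)
    have c1: "coeff (w (k+1)) (Suc (d+k)) = 0" using IH(2) by (intro coeff_eq_0) linarith
    have c2: "coeff (w k) (Suc (d+k)) = 0" using IH(1) by (intro coeff_eq_0) linarith
    have c3: "coeff (g k) (Suc (d+k)) = 0" using g[OF kK] by (intro coeff_eq_0) linarith
    have "coeff (w (Suc k + 1)) (d + Suc k) = be k * coeff (w (k+1)) (d+k)"
      unfolding eq using c1 c2 c3 by (simp add: coeff_lin_mult_Suc)
    also have "\<dots> = coeff (w 1) d * (\<Prod>i<Suc k. be i)" using IH(3) by (simp add: mult_ac)
    finally show ?case using deg IH(2) by simp
  qed
  then show "k \<le> K \<Longrightarrow> ?thesis" by blast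
qed

lemma idF: fixes L :: "'a::comm_ring_1"
  assumes "X2 = L*X1 - C*X0 + G" "S2 = L*S1 - C*S0"
  shows "X1*S2 - X2*S1 = C*(X0*S1 - X1*S0) - G*S1"
  unfolding assms by (simp add: algebra_simps)
lemma idF2: fixes L :: "'a::comm_ring_1"
  assumes "X2 = L*X1 - C*X0 + G" "S2 = L*S1 - C*S0"
  shows "Xi*S2 - X2*Si = L*(Xi*S1 - X1*Si) - C*(Xi*S0 - X0*Si) - G*Si"
  unfolding assms by (simp add: algebra_simps)
lemma idB1: fixes L :: "'a::comm_ring_1"
  assumes "X0 = L*X1 - C*X2 + G" "S0 = L*S1 - C*S2"
  shows "X0*S1 - X1*S0 = C*(X1*S2 - X2*S1) + G*S1"
  unfolding assms by (simp add: algebra_simps)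
lemma idB2: fixes L :: "'a::comm_ring_1"
  assumes "X0 = L*X1 - C*X2 + G" "S0 = L*S1 - C*S2"
  shows "X0*Sj - Xj*S0 = L*(X1*Sj - Xj*S1) - C*(X2*Sj - Xj*S2) + G*Sj"
  unfolding assms by (simp add: algebra_simps)

lemma coeff_mult_le_sum:
  fixes p q :: "complex poly"
  assumes "degree p \<le> a" "degree q \<le> b"
  shows "coeff (p * q) (a + b) = coeff p a * coeff q b"
proof (cases "degree p = a \<and> degree q = b")
  case True then show ?thesis using coeff_mult_degree_sum[of p q] by simp
next
  case False
  then have "degree p < a \<or> degree q < b" using assms by auto
  then have "coeff p a = 0 \<or> coeff q b = 0" by (auto intro: coeff_eq_0)
  moreover have "degree (p * q) < a + b"
    using degree_mult_le[of p q] assms \<open>degree p < a \<or> degree q < b\<close> by linarith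
  ultimately show ?thesis by (auto intro: coeff_eq_0)
qed

lemma smult_as_mult: "smult c p = [:c:] * p"
  by simp

locale wr =
  fixes X S :: "nat \<Rightarrow> complex poly" and r n :: nat
    and alF beF cF gF alB beB cB gB :: "nat \<Rightarrow> complex" and m0 :: complex
  assumes fX: "\<And>j. r \<le> j \<Longrightarrow> j+2 < n \<Longrightarrow>
      X (j+2) = [:alF j, beF j:] * X (j+1) - smult (cF j) (X j) + smult (gF j) (X r)"
  and fS: "\<And>j. r \<le> j \<Longrightarrow> j+2 < n \<Longrightarrow>
      S (j+2) = [:alF j, beF j:] * S (j+1) - smult (cF j) (S j) + smult (gF j) (S r)"
  and bX: "\<And>j. j < r \<Longrightarrow>
      X j = [:alB j, beB j:] * X (j+1) - smult (cB j) (X (j+2)) + smult (gB j) (X r)"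
  and bS: "\<And>j. j < r \<Longrightarrow>
      S j = [:alB j, beB j:] * S (j+1) - smult (cB j) (S (j+2)) + smult (gB j) (S r)"
  and Xr: "X r = 1" and Xr1: "X (r+1) = 1" and Sr: "S r = 0" and Sr1: "S (r+1) = [:m0:]"
  and rn: "r + 1 < n"
begin

definition D where "D i j = X i * S j - X j * S i"

lemma XR: "r + k + 1 < n \<Longrightarrow> degree (X (r+k+1)) \<le> k"
proof -
  assume a: "r + k + 1 < n"
  have "degree ((\<lambda>k. X (r+k)) (k+1)) \<le> 0 + k"
  proof (rule deg_rec[where al="\<lambda>k. alF (r+k)" and be="\<lambda>k. beF (r+k)" and c="\<lambda>k. cF (r+k)"
        and g="\<lambda>k. smult (gF (r+k)) 1" and K="n - r - 2", THEN conjunct1])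
    fix k assume "k < n - r - 2"
    then show "X (r + (k + 2)) = [:alF (r + k), beF (r + k):] * X (r + (k + 1)) - smult (cF (r + k)) (X (r + k)) + smult (gF (r + k)) 1"
      using fX[of "r+k"] Xr by (simp add: add.assoc)
  qed (use a Xr Xr1 in auto)
  then show ?thesis by simp
qed

lemma SR: "r + k + 1 < n \<Longrightarrow> degree (S (r+k+1)) \<le> k \<and> coeff (S (r+k+1)) k = m0 * (\<Prod>i<k. beF (r+i))"
proof -
  assume a: "r + k + 1 < n"
  have "degree ((\<lambda>k. S (r+k)) (k+1)) \<le> 0 + k \<and> coeff ((\<lambda>k. S (r+k)) (k+1)) (0+k) = coeff ((\<lambda>k. S (r+k)) 1) 0 * (\<Prod>i<k. beF (r+i))"
  proof (rule deg_rec[where al="\<lambda>k. alF (r+k)" and be="\<lambda>k. beF (r+k)" and c="\<lambda>k. cF (r+k)"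
        and g="\<lambda>k. 0" and K="n - r - 2"])
    fix k assume "k < n - r - 2"
    then show "S (r + (k + 2)) = [:alF (r + k), beF (r + k):] * S (r + (k + 1)) - smult (cF (r + k)) (S (r + k)) + 0"
      using fS[of "r+k"] Sr by (simp add: add.assoc)
  qed (use a Sr Sr1 in auto)
  then show ?thesis using Sr1 by simp
qed

lemma XL: "k \<le> r \<Longrightarrow> degree (X (r-k)) \<le> k \<and> coeff (X (r-k)) k = (\<Prod>i<k. beB (r-1-i))"
proof -
  assume a: "k \<le> r"
  have "degree ((\<lambda>k. X (r+1-k)) (k+1)) \<le> 0 + k \<and> coeff ((\<lambda>k. X (r+1-k)) (k+1)) (0+k) = coeff ((\<lambda>k. X (r+1-k)) 1) 0 * (\<Prod>i<k. beB (r-1-i))"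
  proof (rule deg_rec[where al="\<lambda>k. alB (r-1-k)" and be="\<lambda>k. beB (r-1-k)" and c="\<lambda>k. cB (r-1-k)"
        and g="\<lambda>k. smult (gB (r-1-k)) 1" and K="r"])
    fix k assume k: "k < r"
    have e1: "r - 1 - k + 1 = r + 1 - (k+1)" "r - 1 - k + 2 = r + 1 - k" "r + 1 - (k+2) = r - 1 - k"
      using k by auto
    show "X (r + 1 - (k + 2)) = [:alB (r - 1 - k), beB (r - 1 - k):] * X (r + 1 - (k + 1)) - smult (cB (r - 1 - k)) (X (r + 1 - k)) + smult (gB (r - 1 - k)) 1"
      using bX[of "r-1-k"] k Xr unfolding e1 by simp
  qed (use a Xr Xr1 in auto)
  then show ?thesis using a Xr by simp
qed

lemma SL: "k + 1 \<le> r \<Longrightarrow> degree (S (r-1-k)) \<le> k"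
proof -
  assume a: "k + 1 \<le> r"
  have Sr1': "S (r-1) = - smult (cB (r-1)) [:m0:]"
    using bS[of "r-1"] a Sr Sr1 by simp
  have "degree ((\<lambda>k. S (r-k)) (k+1)) \<le> 0 + k"
  proof (rule deg_rec[where al="\<lambda>k. alB (r-2-k)" and be="\<lambda>k. beB (r-2-k)" and c="\<lambda>k. cB (r-2-k)"
        and g="\<lambda>k. 0" and K="r-1", THEN conjunct1])
    fix k assume k: "k < r - 1"
    have e1: "r - 2 - k + 1 = r - (k+1)" "r - 2 - k + 2 = r - k" "r - (k+2) = r - 2 - k"
      using k by auto
    show "S (r - (k + 2)) = [:alB (r - 2 - k), beB (r - 2 - k):] * S (r - (k + 1)) - smult (cB (r - 2 - k)) (S (r - k)) + 0"
      using bS[of "r-2-k"] k Sr unfolding e1 by simp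
  qed (use a Sr Sr1' in auto)
  then show ?thesis by (simp add: diff_diff_add)
qed

lemma degX: "i < n \<Longrightarrow> degree (X i) \<le> (if i \<le> r then r - i else i - r - 1)"
  using XR[of "i - r - 1"] XL[of "r - i"] by (cases "i \<le> r") auto

lemma degS: "i < n \<Longrightarrow> degree (S i) \<le> (if i \<le> r then r - i - 1 else i - r - 1)"
proof (cases "i < r")
  case True then show "i < n \<Longrightarrow> ?thesis" using SL[of "r - 1 - i"] by simp
next
  case False then show "i < n \<Longrightarrow> ?thesis" using SR[of "i - r - 1"] Sr by (cases "i = r") auto
qed


lemma D_same[simp]: "D i i = 0" by (simp add: D_def)

lemma D_swap: "D j i = - D i j" by (simp add: D_def)

lemma DR1: "r + k + 1 < n \<Longrightarrow> degree (D (r+k) (r+k+1)) \<le> k - 1"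
proof (induction k)
  case 0
  then show ?case using Xr Sr Sr1 by (simp add: D_def)
next
  case (Suc k)
  let ?i = "r + k"
  have a: "?i + 2 < n" using Suc.prems by simp
  have e1: "X (?i+2) = [:alF ?i, beF ?i:] * X (?i+1) - [:cF ?i:] * X ?i + [:gF ?i:]"
    using fX[of ?i] a Xr by simp
  have e2: "S (?i+2) = [:alF ?i, beF ?i:] * S (?i+1) - [:cF ?i:] * S ?i"
    using fS[of ?i] a Sr by simp
  have eq: "D (?i+1) (?i+2) = smult (cF ?i) (D ?i (?i+1)) - smult (gF ?i) (S (?i+1))"
    using idF[OF e1 e2] unfolding D_def by simp
  have d1: "degree (D ?i (?i+1)) \<le> k" using Suc by simp
  have d2: "degree (S (?i+1)) \<le> k" using SR[of k] a by simp
  have "degree (D (?i+1) (?i+2)) \<le> k"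
    unfolding eq using d1 d2
    by (intro degree_diff_le order.trans[OF degree_smult_le]) auto
  then show ?case by (simp add: add.assoc)
qed

lemma DR: assumes "r + 1 \<le> i" "i \<le> j" "j < n" shows "degree (D i j) \<le> j - r - 2"
proof (cases "i = j")
  case True then show ?thesis by simp
next
  case False
  define k where "k = j - i - 1"
  have j: "j = i + k + 1" using False assms k_def by auto
  have "degree ((\<lambda>k. D i (i+k)) (k+1)) \<le> (i - r - 1) + k"
  proof (rule deg_rec[where al="\<lambda>k. alF (i+k)" and be="\<lambda>k. beF (i+k)" and c="\<lambda>k. cF (i+k)"
        and g="\<lambda>k. - smult (gF (i+k)) (S i)" and K="n - i - 2", THEN conjunct1])
    fix k assume k: "k < n - i - 2"
    have e1: "X (i+k+2) = [:alF (i+k), beF (i+k):] * X (i+k+1) - [:cF (i+k):] * X (i+k) + [:gF (i+k):]"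
      using fX[of "i+k"] k assms Xr by simp
    have e2: "S (i+k+2) = [:alF (i+k), beF (i+k):] * S (i+k+1) - [:cF (i+k):] * S (i+k)"
      using fS[of "i+k"] k assms Sr by simp
    show "D i (i + (k + 2)) = [:alF (i + k), beF (i + k):] * D i (i + (k + 1)) - smult (cF (i + k)) (D i (i + k)) + - smult (gF (i + k)) (S i)"
      using idF2[OF e1 e2, of "X i" "S i"] unfolding D_def by (simp add: add.assoc)
  next
    show "degree (D i (i + 1)) \<le> i - r - 1" using DR1[of "i - r"] assms False by simp
  next
    fix k show "degree (- smult (gF (i + k)) (S i)) \<le> i - r - 1 + k"
    proof -
      have "degree (S i) \<le> i - r - 1" using degS[of i] assms by simp
      then have "degree (smult (gF (i + k)) (S i)) \<le> i - r - 1 + k"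
        using degree_smult_le[of "gF (i+k)" "S i"] by linarith
      then show ?thesis by simp
    qed
  next
    show "k \<le> n - i - 2" using j assms by simp
  qed simp
  then show ?thesis using j assms by simp
qed


lemma Drr1: "D r (r+1) = [:m0:]" using Xr Sr Sr1 by (simp add: D_def)

lemma DL1: "i < r \<Longrightarrow> degree (D i (i+1)) \<le> r - 1 - i"
proof (induction "r - 1 - i" arbitrary: i)
  case 0
  then have i: "i = r - 1" by simp
  have e1: "X i = [:alB i, beB i:] * X (i+1) - [:cB i:] * X (i+2) + [:gB i:]"
    using bX[of i] 0 Xr by simp
  have e2: "S i = [:alB i, beB i:] * S (i+1) - [:cB i:] * S (i+2)"
    using bS[of i] 0 Sr by simp
  have "D i (i+1) = smult (cB i) (D (i+1) (i+2)) + smult (gB i) (S (i+1))"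
    using idB1[OF e1 e2] unfolding D_def by simp
  also have "\<dots> = smult (cB i) [:m0:]" using i 0 Drr1 Sr by simp
  finally show ?case by simp
next
  case (Suc k)
  have e1: "X i = [:alB i, beB i:] * X (i+1) - [:cB i:] * X (i+2) + [:gB i:]"
    using bX[of i] Suc Xr by simp
  have e2: "S i = [:alB i, beB i:] * S (i+1) - [:cB i:] * S (i+2)"
    using bS[of i] Suc Sr by simp
  have eq: "D i (i+1) = smult (cB i) (D (i+1) (i+2)) + smult (gB i) (S (i+1))"
    using idB1[OF e1 e2] unfolding D_def by simp
  have d1: "degree (D (i+1) (i+2)) \<le> r - 1 - i"
  proof (cases "i + 1 < r")
    case True
    have "k = r - 1 - (i+1)" using Suc(2) by linarith
    from Suc(1)[OF this] True show ?thesis by simp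
  next
    case False then have "i + 1 = r" using Suc by simp
    then show ?thesis using Drr1 by (simp add: numeral_2_eq_2)
  qed
  have d2: "degree (S (i+1)) \<le> r - 1 - i"
    using degS[of "i+1"] Suc(2,3) rn by simp
  show ?case unfolding eq
    by (intro degree_add_le order.trans[OF degree_smult_le] d1 d2)
qed

lemma DL: assumes "i \<le> j" "j \<le> r" shows "degree (D i j) \<le> r - 1 - i"
proof (cases "i = j")
  case True then show ?thesis by simp
next
  case False
  define k where "k = j - 1 - i"
  have j: "i = j - (k + 1)" "k \<le> j - 1" using False assms k_def by auto
  have "degree ((\<lambda>k. D (j-k) j) (k+1)) \<le> (r - j) + k"
  proof (rule deg_rec[where al="\<lambda>k. alB (j-2-k)" and be="\<lambda>k. beB (j-2-k)" and c="\<lambda>k. cB (j-2-k)"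
        and g="\<lambda>k. smult (gB (j-2-k)) (S j)" and K="j - 1", THEN conjunct1])
    fix k assume k: "k < j - 1"
    define l where "l = j - 2 - k"
    have l: "l < r" "l + 1 = j - (k+1)" "l + 2 = j - k" "j - (k+2) = l" using k assms l_def by auto
    have e1: "X l = [:alB l, beB l:] * X (l+1) - [:cB l:] * X (l+2) + [:gB l:]"
      using bX[of l] l Xr by simp
    have e2: "S l = [:alB l, beB l:] * S (l+1) - [:cB l:] * S (l+2)"
      using bS[of l] l Sr by simp
    show "D (j - (k + 2)) j = [:alB (j - 2 - k), beB (j - 2 - k):] * D (j - (k + 1)) j - smult (cB (j - 2 - k)) (D (j - k) j) + smult (gB (j - 2 - k)) (S j)"
      using idB2[OF e1 e2, of "S j" "X j"] unfolding D_def l(4) l_def[symmetric] l(2,3)[symmetric] by simp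
  next
    show "degree (D (j - 1) j) \<le> r - j" using DL1[of "j - 1"] assms False by simp
  next
    fix k show "degree (smult (gB (j - 2 - k)) (S j)) \<le> r - j + k"
    proof -
      have "degree (S j) \<le> r - j" using degS[of j] assms rn by simp
      then show ?thesis using degree_smult_le[of "gB (j - 2 - k)" "S j"] by linarith
    qed
  next
    show "k \<le> j - 1" using j by simp
  qed simp
  then have A: "degree (D (j - (k+1)) j) \<le> r - j + k" by simp
  have B: "r - j + k = r - 1 - i" using k_def False assms by linarith
  from A have "degree (D i j) \<le> r - j + k" by (simp only: j(1)[symmetric])
  then show ?thesis unfolding B .
qed

lemma Dcross:
  assumes "i \<le> r" "r < j" "j < n"
  shows "degree (D i j) \<le> j - i - 1 \<and> coeff (D i j) (j - i - 1) = coeff (X i) (r - i) * coeff (S j) (j - r - 1)"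
proof -
  have dXi: "degree (X i) \<le> r - i" using degX[of i] assms by simp
  have dSj: "degree (S j) \<le> j - r - 1" using degS[of j] assms by simp
  have e: "r - i + (j - r - 1) = j - i - 1" using assms by simp
  have d1: "degree (X i * S j) \<le> j - i - 1"
    using degree_mult_le[of "X i" "S j"] dXi dSj e by linarith
  have c1: "coeff (X i * S j) (j - i - 1) = coeff (X i) (r - i) * coeff (S j) (j - r - 1)"
    using coeff_mult_le_sum[OF dXi dSj] e by simp
  have d2: "degree (X j * S i) < j - i - 1 \<or> X j * S i = 0"
  proof (cases "i = r")
    case True then show ?thesis using Sr by simp
  next
    case False
    have "degree (X j) \<le> j - r - 1" using degX[of j] assms by simp
    moreover have "degree (S i) \<le> r - i - 1" using degS[of i] assms by simp
    ultimately have "degree (X j * S i) \<le> (j - r - 1) + (r - i - 1)"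
      using degree_mult_le[of "X j" "S i"] by linarith
    then show ?thesis using assms False by auto
  qed
  then have d2': "degree (X j * S i) \<le> j - i - 1" "coeff (X j * S i) (j - i - 1) = 0"
    by (auto intro: coeff_eq_0)
  have "degree (D i j) \<le> j - i - 1" unfolding D_def by (rule degree_diff_le[OF d1 d2'(1)])
  moreover have "coeff (D i j) (j - i - 1) = coeff (X i) (r - i) * coeff (S j) (j - r - 1)"
    unfolding D_def coeff_diff c1 d2'(2) by simp
  ultimately show ?thesis by blast
qed

lemma Dall: assumes "i \<le> j" "j < n" "\<not> (i = 0 \<and> j = n - 1)"
  shows "degree (D i j) \<le> n - 3"
proof -
  consider "j \<le> r" | "r + 1 \<le> i" | "i \<le> r" "r < j" by linarith
  then show ?thesis
  proof cases
    case 1 then show ?thesis using DL[of i j] assms rn by linarith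
  next
    case 2 then show ?thesis using DR[of i j] assms rn by linarith
  next
    case 3
    then have "degree (D i j) \<le> j - i - 1" using Dcross[of i j] assms by simp
    moreover have "i \<noteq> 0 \<or> j \<noteq> n - 1" using assms(3) by (simp only: de_Morgan_conj)
    then have "j - i - 1 \<le> n - 3" using assms(1,2) 3 rn by (elim disjE) linarith+
    ultimately show ?thesis by linarith
  qed
qed

lemma D0: "degree (D 0 (n-1)) \<le> n - 2 \<and>
   coeff (D 0 (n-1)) (n-2) = (\<Prod>i<r. beB (r-1-i)) * (m0 * (\<Prod>i<n-2-r. beF (r+i)))"
proof -
  have e1: "n - 1 - 1 = n - 2" by linarith
  have e2: "n - 1 - r - 1 = n - 2 - r" by linarith
  have e3: "r + (n - 2 - r) + 1 = n - 1" using rn by linarith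
  have p1: "r < n - 1" "n - 1 < n" using rn by linarith+
  note c0 = Dcross[OF le0 p1]
  have c: "degree (D 0 (n-1)) \<le> n - 2" "coeff (D 0 (n-1)) (n-2) = coeff (X 0) r * coeff (S (n-1)) (n - 2 - r)"
    using c0 unfolding e1 e2 minus_nat.diff_0 by blast+
  have x: "coeff (X 0) r = (\<Prod>i<r. beB (r-1-i))" using XL[OF order_refl] by simp
  have p2: "r + (n - 2 - r) + 1 < n" using rn by linarith
  have s: "coeff (S (n-1)) (n - 2 - r) = m0 * (\<Prod>i<n-2-r. beF (r+i))"
    using SR[OF p2] unfolding e3 by blast
  show ?thesis using c x s by simp
qed

end

definition eqn :: "(nat \<Rightarrow> real) \<Rightarrow> (nat \<Rightarrow> real) \<Rightarrow> nat \<Rightarrow> complex \<Rightarrow> (nat \<Rightarrow> complex) \<Rightarrow> nat \<Rightarrow> bool" where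
  "eqn mu Q r lam Y j \<longleftrightarrow>
     - (((Y (Suc (Suc j)) - Y (Suc j)) / complex_of_real (mu (Suc j)) - (Y (Suc j) - Y j) / complex_of_real (mu j))
         / complex_of_real (mu j)) + complex_of_real (Q j) * Y r = lam * Y (Suc j)"

definition "alF mu j = 1 + complex_of_real (mu (Suc j) / mu j)"
definition "beF mu j = - complex_of_real (mu j * mu (Suc j))"
definition "cF mu j = complex_of_real (mu (Suc j) / mu j)"
definition "gF mu Q j = complex_of_real (mu j * mu (Suc j) * Q j)"
definition "alB mu j = 1 + complex_of_real (mu j / mu (Suc j))"
definition "beB mu j = - complex_of_real (mu j ^ 2)"
definition "cB mu j = complex_of_real (mu j / mu (Suc j))"
definition "gB mu Q j = complex_of_real (mu j ^ 2 * Q j)"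

lemma fwd_gen:
  fixes m m' q lam y0 y1 y2 yr :: complex
  assumes "m \<noteq> 0" "m' \<noteq> 0"
  shows "(- (((y2 - y1) / m' - (y1 - y0) / m) / m) + q * yr = lam * y1) \<longleftrightarrow>
     y2 = (1 + m' / m + lam * (- (m * m'))) * y1 - (m' / m) * y0 + (m * m' * q) * yr"
proof -
  have "(- (((y2 - y1) / m' - (y1 - y0) / m) / m) + q * yr = lam * y1) \<longleftrightarrow>
        (m * m') * ((- (((y2 - y1) / m' - (y1 - y0) / m) / m) + q * yr) - lam * y1) = 0"
    using assms by simp
  also have "(m * m') * ((- (((y2 - y1) / m' - (y1 - y0) / m) / m) + q * yr) - lam * y1)
      = - (y2 - ((1 + m' / m + lam * (- (m * m'))) * y1 - (m' / m) * y0 + (m * m' * q) * yr))"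
    using assms by (simp add: field_simps power2_eq_square)
  finally show ?thesis by auto
qed

lemma eqn_fwd:
  assumes "mu j \<noteq> 0" "mu (Suc j) \<noteq> 0"
  shows "eqn mu Q r lam Y j \<longleftrightarrow>
    Y (Suc (Suc j)) = (alF mu j + lam * beF mu j) * Y (Suc j) - cF mu j * Y j + gF mu Q j * Y r"
  using fwd_gen[of "complex_of_real (mu j)" "complex_of_real (mu (Suc j))"] assms
  unfolding eqn_def alF_def beF_def cF_def gF_def by simp

lemma bwd_gen:
  fixes m m' q lam y0 y1 y2 yr :: complex
  assumes "m \<noteq> 0" "m' \<noteq> 0"
  shows "(- (((y2 - y1) / m' - (y1 - y0) / m) / m) + q * yr = lam * y1) \<longleftrightarrow>
     y0 = (1 + m / m' + lam * (- (m^2))) * y1 - (m / m') * y2 + (m^2 * q) * yr"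
proof -
  have "(- (((y2 - y1) / m' - (y1 - y0) / m) / m) + q * yr = lam * y1) \<longleftrightarrow>
        m^2 * ((- (((y2 - y1) / m' - (y1 - y0) / m) / m) + q * yr) - lam * y1) = 0"
    using assms by simp
  also have "m^2 * ((- (((y2 - y1) / m' - (y1 - y0) / m) / m) + q * yr) - lam * y1)
      = ((1 + m / m' + lam * (- (m^2))) * y1 - (m / m') * y2 + (m^2 * q) * yr) - y0"
    using assms by (simp add: field_simps power2_eq_square)
  finally show ?thesis by auto
qed

lemma eqn_bwd:
  assumes "mu j \<noteq> 0" "mu (Suc j) \<noteq> 0"
  shows "eqn mu Q r lam Y j \<longleftrightarrow>
    Y j = (alB mu j + lam * beB mu j) * Y (Suc j) - cB mu j * Y (Suc (Suc j)) + gB mu Q j * Y r"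
  using bwd_gen[of "complex_of_real (mu j)" "complex_of_real (mu (Suc j))"] assms
  unfolding eqn_def alB_def beB_def cB_def gB_def by simp


fun rec3 :: "(nat \<Rightarrow> complex) \<Rightarrow> (nat \<Rightarrow> complex) \<Rightarrow> (nat \<Rightarrow> complex) \<Rightarrow> (nat \<Rightarrow> complex)
   \<Rightarrow> complex poly \<Rightarrow> complex poly \<Rightarrow> complex poly \<Rightarrow> nat \<Rightarrow> complex poly" where
  "rec3 al be c g z y0 y1 0 = y0"
| "rec3 al be c g z y0 y1 (Suc 0) = y1"
| "rec3 al be c g z y0 y1 (Suc (Suc k)) =
     [:al k, be k:] * rec3 al be c g z y0 y1 (Suc k) - smult (c k) (rec3 al be c g z y0 y1 k) + smult (g k) z"

definition seqP :: "(nat \<Rightarrow> real) \<Rightarrow> (nat \<Rightarrow> real) \<Rightarrow> nat \<Rightarrow> complex poly \<Rightarrow> complex poly \<Rightarrow> nat \<Rightarrow> complex poly" where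
  "seqP mu Q r y0 y1 i = (if r \<le> i then
     rec3 (\<lambda>k. alF mu (r+k)) (\<lambda>k. beF mu (r+k)) (\<lambda>k. cF mu (r+k)) (\<lambda>k. gF mu Q (r+k)) y0 y0 y1 (i - r)
   else rec3 (\<lambda>k. alB mu (r-1-k)) (\<lambda>k. beB mu (r-1-k)) (\<lambda>k. cB mu (r-1-k)) (\<lambda>k. gB mu Q (r-1-k)) y0 y1 y0 (r+1-i))"

abbreviation "recB mu Q r y0 y1 \<equiv> rec3 (\<lambda>k. alB mu (r-1-k)) (\<lambda>k. beB mu (r-1-k)) (\<lambda>k. cB mu (r-1-k)) (\<lambda>k. gB mu Q (r-1-k)) y0 y1 y0"

lemma seqP_r: "seqP mu Q r y0 y1 r = y0" by (simp add: seqP_def)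
lemma seqP_r1: "seqP mu Q r y0 y1 (r+1) = y1" by (simp add: seqP_def)

lemma seqP_F:
  assumes "r \<le> j"
  shows "seqP mu Q r y0 y1 (j+2) = [:alF mu j, beF mu j:] * seqP mu Q r y0 y1 (j+1)
     - smult (cF mu j) (seqP mu Q r y0 y1 j) + smult (gF mu Q j) (seqP mu Q r y0 y1 r)"
proof -
  have e: "j + 2 - r = Suc (Suc (j - r))" "j + 1 - r = Suc (j - r)" "r + (j - r) = j" using assms by auto
  show ?thesis using assms unfolding seqP_def e by simp
qed

lemma seqP_low:
  assumes "i \<le> r + 1"
  shows "seqP mu Q r y0 y1 i = recB mu Q r y0 y1 (r + 1 - i)"
proof -
  consider "i < r" | "i = r" | "i = r + 1" using assms by linarith
  then show ?thesis
  proof cases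
    case 1 then show ?thesis by (simp add: seqP_def)
  next
    case 2 then show ?thesis by (simp add: seqP_def)
  next
    case 3 then show ?thesis by (simp add: seqP_def)
  qed
qed

lemma seqP_B:
  assumes "j < r"
  shows "seqP mu Q r y0 y1 j = [:alB mu j, beB mu j:] * seqP mu Q r y0 y1 (j+1)
     - smult (cB mu j) (seqP mu Q r y0 y1 (j+2)) + smult (gB mu Q j) (seqP mu Q r y0 y1 r)"
proof -
  have e: "r + 1 - j = Suc (Suc (r - 1 - j))" "r + 1 - (j + 1) = Suc (r - 1 - j)" "r + 1 - (j + 2) = r - 1 - j"
     "r - Suc (r - Suc j) = j" using assms by auto
  have "seqP mu Q r y0 y1 j = recB mu Q r y0 y1 (r + 1 - j)" using assms by (intro seqP_low) auto
  also have "\<dots> = [:alB mu j, beB mu j:] * recB mu Q r y0 y1 (r + 1 - (j+1))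
     - smult (cB mu j) (recB mu Q r y0 y1 (r + 1 - (j+2))) + smult (gB mu Q j) y0"
    unfolding e(1,2,3) by (simp add: e(4))
  also have "recB mu Q r y0 y1 (r + 1 - (j+1)) = seqP mu Q r y0 y1 (j+1)"
    using assms by (intro seqP_low[symmetric]) auto
  also have "recB mu Q r y0 y1 (r + 1 - (j+2)) = seqP mu Q r y0 y1 (j+2)"
    using assms by (intro seqP_low[symmetric]) auto
  finally show ?thesis by (simp add: seqP_r)
qed

lemma poly_lin: "poly ([:a, b:] * p) x = (a + x * b) * poly p x"
  by (simp add: algebra_simps)

lemma seqP_eqn:
  assumes "mu j \<noteq> 0" "mu (Suc j) \<noteq> 0"
  shows "eqn mu Q r lam (\<lambda>i. poly (seqP mu Q r y0 y1 i) lam) j"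
proof (cases "r \<le> j")
  case True
  show ?thesis unfolding eqn_fwd[OF assms]
    using arg_cong[OF seqP_F[OF True, of mu Q y0 y1], of "\<lambda>p. poly p lam"]
    by (simp add: poly_lin algebra_simps)
next
  case False
  then have F: "j < r" by simp
  show ?thesis unfolding eqn_bwd[OF assms]
    using arg_cong[OF seqP_B[OF F, of mu Q y0 y1], of "\<lambda>p. poly p lam"]
    by (simp add: poly_lin algebra_simps)
qed

lemma quad: fixes A1 A2 A3 A4 B1 B2 B3 B4 x0 x1 x2 x3 s0 s1 s2 s3 :: "'a::comm_ring"
 shows "(A1*x0 + A2*x1 + A3*x2 + A4*x3)*(B1*s0 + B2*s1 + B3*s2 + B4*s3) - (B1*x0 + B2*x1 + B3*x2 + B4*x3)*(A1*s0 + A2*s1 + A3*s2 + A4*s3)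
  = (A1*B2 - A2*B1)*(x0*s1 - x1*s0) + (A1*B3 - A3*B1)*(x0*s2 - x2*s0) + (A1*B4 - A4*B1)*(x0*s3 - x3*s0)
  + (A2*B3 - A3*B2)*(x1*s2 - x2*s1) + (A2*B4 - A4*B2)*(x1*s3 - x3*s1) + (A3*B4 - A4*B3)*(x2*s3 - x3*s2)"
  by (simp add: algebra_simps)
lemma det2: fixes c0 c1 u1 u2 v1 v2 :: "'a::field"
  assumes "c0*u1 + c1*u2 = 0" "c0*v1 + c1*v2 = 0" "c0 \<noteq> 0 \<or> c1 \<noteq> 0"
  shows "u1*v2 - v1*u2 = 0"
proof -
  have "c0 * (u1*v2 - v1*u2) = 0"
  proof -
    have "c0 * (u1*v2 - v1*u2) = (c0*u1 + c1*u2)*v2 - (c0*v1 + c1*v2)*u2" by (simp add: algebra_simps)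
    then show ?thesis using assms by simp
  qed
  moreover have "c1 * (u1*v2 - v1*u2) = 0"
  proof -
    have "c1 * (u1*v2 - v1*u2) = (c0*v1 + c1*v2)*u1 - (c0*u1 + c1*u2)*v1" by (simp add: algebra_simps)
    then show ?thesis using assms by simp
  qed
  ultimately show ?thesis using assms(3) by auto
qed
lemma det2_conv: fixes u1 u2 v1 v2 :: "'a::field"
  assumes "u1*v2 - v1*u2 = 0"
  shows "\<exists>c0 c1. (c0 \<noteq> 0 \<or> c1 \<noteq> 0) \<and> c0*u1 + c1*u2 = 0 \<and> c0*v1 + c1*v2 = 0"
proof (cases "u1 = 0 \<and> u2 = 0")
  case True
  show ?thesis
  proof (cases "v1 = 0 \<and> v2 = 0")
    case True2: True
    then show ?thesis using True by (intro exI[of _ 1] exI[of _ 0]) simp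
  next
    case False
    then show ?thesis using True by (intro exI[of _ v2] exI[of _ "- v1"]) (auto simp: algebra_simps)
  qed
next
  case False
  then show ?thesis using assms by (intro exI[of _ u2] exI[of _ "- u1"]) (auto simp: algebra_simps)
qed

lemma lin_gen: fixes m m' q lam c0 c1 y0 y1 y2 yr z0 z1 z2 zr :: complex
 shows "(-(((c0*y2 + c1*z2 - (c0*y1 + c1*z1))/m' - (c0*y1+c1*z1 - (c0*y0 + c1*z0))/m)/m) + q*(c0*yr + c1*zr) - lam*(c0*y1+c1*z1))
   = c0 * (-(((y2-y1)/m' - (y1-y0)/m)/m) + q*yr - lam*y1) + c1*(-(((z2-z1)/m' - (z1-z0)/m)/m) + q*zr - lam*z1)"
by (cases "m = 0"; cases "m' = 0") (simp_all add: field_simps)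


locale bvp =
  fixes T :: "real set" and a :: real and q :: "real \<Rightarrow> real" and r :: nat
  assumes fin: "finite T" and aT: "a \<in> T" and ra: "card {t\<in>T. t < a} = r"
    and rn: "r + 1 < card T" and n3: "3 \<le> card T"
begin

abbreviation "n \<equiv> card T"
abbreviation "t \<equiv> tsn T"
definition "mu k = t (Suc k) - t k"
definition "Q k = q (t k)"

lemma mu_pos: "Suc k < n \<Longrightarrow> mu k > 0"
  unfolding mu_def using tsn_mono[OF fin, of k "Suc k"] by simp

lemma mu_nz: "Suc k < n \<Longrightarrow> mu k \<noteq> 0"
  using mu_pos by (metis less_irrefl)

lemma a_eq: "a = t r"
proof -
  obtain k where k: "k < n" "a = t k" using tsn_surj[OF fin aT] by blast
  have "{s\<in>T. s < a} = t ` {..<k}"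
  proof
    show "{s \<in> T. s < a} \<subseteq> t ` {..<k}"
      using tsn_surj[OF fin] tsn_less_iff[OF fin] k by fastforce
    show "t ` {..<k} \<subseteq> {s \<in> T. s < a}"
      using tsn_in[OF fin] tsn_mono[OF fin] k by auto
  qed
  moreover have "inj_on t {..<k}"
    using tsn_inj[OF fin] k by (intro inj_onI) auto
  ultimately have "card {s\<in>T. s < a} = k" by (simp add: card_image)
  then show ?thesis using ra k by simp
qed

lemma sig: "k + 1 < n \<Longrightarrow> ts_sigma T (t k) = t (k+1)"
  using tsn_sigma[OF fin] by blast

lemma tsmu: "k + 1 < n \<Longrightarrow> ts_mu T (t k) = mu k"
  unfolding ts_mu_def mu_def using sig by simp

lemma is_sol_iff: "is_sol T a q lam y \<longleftrightarrow> (\<forall>j<n-2. eqn mu Q r lam (\<lambda>k. y (t k)) j)"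
proof -
  have cT: "card T = Suc (Suc (n-2))" using n3 by simp
  have A: "(- ts_delta T (ts_delta T y) (t j) + complex_of_real (q (t j)) * y a = lam * y (ts_sigma T (t j)))
        \<longleftrightarrow> eqn mu Q r lam (\<lambda>k. y (t k)) j" if j: "j < n - 2" for j
  proof -
    have s1: "ts_sigma T (t j) = t (Suc j)" using sig[of j] j by simp
    have s2: "ts_sigma T (t (Suc j)) = t (Suc (Suc j))" using sig[of "Suc j"] j by simp
    have m1: "ts_mu T (t j) = mu j" using tsmu[of j] j by simp
    have m2: "ts_mu T (t (Suc j)) = mu (Suc j)" using tsmu[of "Suc j"] j by simp
    show ?thesis unfolding ts_delta_def s1 s2 m1 m2 eqn_def Q_def a_eq[symmetric] by simp
  qed
  show ?thesis unfolding is_sol_def tsn_kappa2[OF fin cT] using A by auto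
qed

definition bfv :: "real \<Rightarrow> real \<Rightarrow> real \<Rightarrow> real \<Rightarrow> (nat \<Rightarrow> complex) \<Rightarrow> complex" where
  "bfv c11 c12 c21 c22 Y = complex_of_real c11 * Y 0 + complex_of_real c12 * ((Y 1 - Y 0) / complex_of_real (mu 0))
     + complex_of_real c21 * Y (n-2) + complex_of_real c22 * ((Y (n-1) - Y (n-2)) / complex_of_real (mu (n-2)))"

lemma bform_eq: "bform T c11 c12 c21 c22 y = bfv c11 c12 c21 c22 (\<lambda>k. y (t k))"
proof -
  have cT: "card T = Suc (Suc (n-2))" using n3 by simp
  have mn: "Min T = t 0" using tsn_Min[OF fin] aT by blast
  have mx: "Max T = t (Suc (n-2))" using tsn_Max[OF fin cT] .
  have rh: "ts_rho T (Max T) = t (n-2)" unfolding mx using tsn_rho[OF fin cT] .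
  have d0: "ts_delta T y (t 0) = (y (t 1) - y (t 0)) / complex_of_real (mu 0)"
    unfolding ts_delta_def using sig[of 0] tsmu[of 0] n3 by simp
  have d1: "ts_delta T y (t (n-2)) = (y (t (n-1)) - y (t (n-2))) / complex_of_real (mu (n-2))"
  proof -
    have "n - 2 + 1 = n - 1" "n - 2 + 1 < n" using n3 by auto
    then show ?thesis unfolding ts_delta_def using sig[of "n-2"] tsmu[of "n-2"] by simp
  qed
  show ?thesis unfolding bform_def bfv_def Let_def mn rh d0 d1 by simp
qed

lemma uniq:
  assumes E: "\<And>j. j < n - 2 \<Longrightarrow> eqn mu Q r lam Y j" "\<And>j. j < n - 2 \<Longrightarrow> eqn mu Q r lam Y' j"
    and I: "Y r = Y' r" "Y (Suc r) = Y' (Suc r)"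
  shows "k < n \<Longrightarrow> Y k = Y' k"
proof -
  have fw: "\<forall>k'\<le>k. r + k' < n \<longrightarrow> Y (r+k') = Y' (r+k')" for k
  proof (induction k)
    case 0 then show ?case using I by simp
  next
    case (Suc k)
    show ?case
    proof (intro allI impI)
      fix k' assume k': "k' \<le> Suc k" "r + k' < n"
      show "Y (r+k') = Y' (r+k')"
      proof (cases "k' \<le> k")
        case True then show ?thesis using Suc k' by blast
      next
        case False
        then have kk: "k' = Suc k" using k' by simp
        show ?thesis
        proof (cases k)
          case 0 then show ?thesis using I kk by simp
        next
          case (Suc k0)
          let ?j = "r + k0"
          have j: "?j < n - 2" using k' kk Suc by simp
          have nz: "mu ?j \<noteq> 0" "mu (Suc ?j) \<noteq> 0" using mu_nz j by auto
          have h1: "Y (r + k0) = Y' (r + k0)" "Y (Suc (r + k0)) = Y' (Suc (r + k0))"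
            using Suc.IH k' kk Suc by (auto simp: le_Suc_eq)
          have "Y (Suc (Suc ?j)) = Y' (Suc (Suc ?j))"
            using E(1)[OF j] E(2)[OF j] h1 I unfolding eqn_fwd[OF nz] by simp
          then show ?thesis using kk Suc by simp
        qed
      qed
    qed
  qed
  have bw: "\<forall>k'\<le>k. k' \<le> r + 1 \<longrightarrow> Y (r+1-k') = Y' (r+1-k')" for k
  proof (induction k)
    case 0 then show ?case using I by simp
  next
    case (Suc k)
    show ?case
    proof (intro allI impI)
      fix k' assume k': "k' \<le> Suc k" "k' \<le> r + 1"
      show "Y (r+1-k') = Y' (r+1-k')"
      proof (cases "k' \<le> k")
        case True then show ?thesis using Suc k' by blast
      next
        case False
        then have kk: "k' = Suc k" using k' by simp
        show ?thesis
        proof (cases k)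
          case 0 then show ?thesis using I kk by simp
        next
          case (Suc k0)
          let ?j = "r - 1 - k0"
          have jr: "?j < r" "Suc ?j = r + 1 - Suc k0" "Suc (Suc ?j) = r + 1 - k0" "?j = r + 1 - k'"
            using k' kk Suc by auto
          have j: "?j < n - 2" using jr rn by simp
          have nz: "mu ?j \<noteq> 0" "mu (Suc ?j) \<noteq> 0" using mu_nz j by auto
          have h1a: "Y (r+1-Suc k0) = Y' (r+1-Suc k0)"
            using Suc.IH[rule_format, of "Suc k0"] Suc k' kk by auto
          have h1b: "Y (r+1-k0) = Y' (r+1-k0)"
            using Suc.IH[rule_format, of k0] Suc k' kk by auto
          have h1: "Y (Suc ?j) = Y' (Suc ?j)" "Y (Suc (Suc ?j)) = Y' (Suc (Suc ?j))"
          proof -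
            have "Suc r - k0 = Suc (r - k0)" using Suc k' kk by auto
            then show "Y (Suc ?j) = Y' (Suc ?j)" "Y (Suc (Suc ?j)) = Y' (Suc (Suc ?j))"
              unfolding jr(2,3) using h1a h1b by auto
          qed
          have "Y ?j = Y' ?j"
            using E(1)[OF j] E(2)[OF j] h1 I unfolding eqn_bwd[OF nz] by simp
          then show ?thesis using jr(4) by simp
        qed
      qed
    qed
  qed
  assume k: "k < n"
  show "Y k = Y' k"
  proof (cases "r \<le> k")
    case True then show ?thesis using fw[of "k - r", rule_format, of "k - r"] k by simp
  next
    case False then show ?thesis using bw[of "r + 1 - k", rule_format, of "r + 1 - k"] by simp
  qed
qed


lemma idx_t: "k < n \<Longrightarrow> card {u\<in>T. u < t k} = k"
proof -
  assume k: "k < n"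
  have "{s\<in>T. s < t k} = t ` {..<k}"
  proof
    show "{s \<in> T. s < t k} \<subseteq> t ` {..<k}"
      using tsn_surj[OF fin] tsn_less_iff[OF fin] k by fastforce
    show "t ` {..<k} \<subseteq> {s \<in> T. s < t k}"
      using tsn_in[OF fin] tsn_mono[OF fin] k by auto
  qed
  moreover have "inj_on t {..<k}"
    using tsn_inj[OF fin] k by (intro inj_onI) auto
  ultimately show ?thesis by (simp add: card_image)
qed

definition fsol :: "(nat \<Rightarrow> complex poly) \<Rightarrow> complex \<Rightarrow> real \<Rightarrow> complex" where
  "fsol X lam s = (if s \<in> T then poly (X (card {u\<in>T. u < s})) lam else 0)"

lemma fsol_t: "k < n \<Longrightarrow> fsol X lam (t k) = poly (X k) lam"
  unfolding fsol_def using tsn_in[OF fin] idx_t by simp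

lemma eqn_cong:
  assumes "\<And>k. k < n \<Longrightarrow> Y k = Y' k" "j < n - 2" "eqn mu Q r lam Y j"
  shows "eqn mu Q r lam Y' j"
proof -
  have "Y j = Y' j" "Y (Suc j) = Y' (Suc j)" "Y (Suc (Suc j)) = Y' (Suc (Suc j))" "Y r = Y' r"
    using assms(1,2) rn by auto
  then show ?thesis using assms(3) unfolding eqn_def by simp
qed

lemma eqn_lin:
  assumes "eqn mu Q r lam Y j" "eqn mu Q r lam Y' j"
  shows "eqn mu Q r lam (\<lambda>k. c0 * Y k + c1 * Y' k) j"
proof -
  have A: "- (((Y (Suc (Suc j)) - Y (Suc j)) / complex_of_real (mu (Suc j)) - (Y (Suc j) - Y j) / complex_of_real (mu j))
         / complex_of_real (mu j)) + complex_of_real (Q j) * Y r - lam * Y (Suc j) = 0"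
    using assms(1) unfolding eqn_def by simp
  have B: "- (((Y' (Suc (Suc j)) - Y' (Suc j)) / complex_of_real (mu (Suc j)) - (Y' (Suc j) - Y' j) / complex_of_real (mu j))
         / complex_of_real (mu j)) + complex_of_real (Q j) * Y' r - lam * Y' (Suc j) = 0"
    using assms(2) unfolding eqn_def by simp
  have "- (((c0 * Y (Suc (Suc j)) + c1 * Y' (Suc (Suc j)) - (c0 * Y (Suc j) + c1 * Y' (Suc j))) / complex_of_real (mu (Suc j))
       - (c0 * Y (Suc j) + c1 * Y' (Suc j) - (c0 * Y j + c1 * Y' j)) / complex_of_real (mu j)) / complex_of_real (mu j))
       + complex_of_real (Q j) * (c0 * Y r + c1 * Y' r) - lam * (c0 * Y (Suc j) + c1 * Y' (Suc j)) = 0"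
    unfolding lin_gen A B by simp
  then show ?thesis unfolding eqn_def by (simp add: algebra_simps)
qed

lemma is_sol_fsol: "is_sol T a q lam (fsol (seqP mu Q r y0 y1) lam)"
  unfolding is_sol_iff
proof (intro allI impI)
  fix j assume j: "j < n - 2"
  have nz: "mu j \<noteq> 0" "mu (Suc j) \<noteq> 0" using mu_nz j by auto
  have E: "eqn mu Q r lam (\<lambda>i. poly (seqP mu Q r y0 y1 i) lam) j" by (rule seqP_eqn[OF nz])
  have C: "\<And>k. k < n \<Longrightarrow> poly (seqP mu Q r y0 y1 k) lam = fsol (seqP mu Q r y0 y1) lam (t k)"
    by (simp add: fsol_t)
  show "eqn mu Q r lam (\<lambda>k. fsol (seqP mu Q r y0 y1) lam (t k)) j"
    by (rule eqn_cong[OF C j E])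
qed

lemma sol_the:
  "(THE y. is_sol T a q lam y \<and> y a = c0 \<and> ts_delta T y a = c1 \<and> (\<forall>s. s \<notin> T \<longrightarrow> y s = 0))
    = fsol (seqP mu Q r [:c0:] [:c0 + c1 * complex_of_real (mu r):]) lam"
proof (rule the_equality)
  let ?f = "fsol (seqP mu Q r [:c0:] [:c0 + c1 * complex_of_real (mu r):]) lam"
  have r1: "r + 1 < n" using rn .
  have mr: "complex_of_real (mu r) \<noteq> 0" using mu_nz[of r] rn by simp
  have fa: "?f a = c0" unfolding a_eq using fsol_t[of r] rn seqP_r by simp
  have fa1: "?f (t (r+1)) = c0 + c1 * complex_of_real (mu r)"
    using fsol_t[of "r+1"] rn seqP_r1 by simp
  have sa: "ts_sigma T a = t (r+1)" "ts_mu T a = mu r" unfolding a_eq using sig tsmu rn by auto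
  show "is_sol T a q lam ?f \<and> ?f a = c0 \<and> ts_delta T ?f a = c1 \<and> (\<forall>s. s \<notin> T \<longrightarrow> ?f s = 0)"
    using is_sol_fsol fa fa1 mr unfolding ts_delta_def sa by (auto simp: fsol_def)
  fix y assume y: "is_sol T a q lam y \<and> y a = c0 \<and> ts_delta T y a = c1 \<and> (\<forall>s. s \<notin> T \<longrightarrow> y s = 0)"
  from y have ysol: "is_sol T a q lam y" and ya: "y a = c0" and yd: "ts_delta T y a = c1"
    and yoff: "\<forall>s. s \<notin> T \<longrightarrow> y s = 0" by auto
  have y1: "y (t (r+1)) = c0 + c1 * complex_of_real (mu r)"
  proof -
    have "(y (t (r+1)) - c0) / complex_of_real (mu r) = c1" using yd ya unfolding ts_delta_def sa by simp
    then show ?thesis using mr by (simp add: field_simps)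
  qed
  have eq: "y (t k) = ?f (t k)" if k: "k < n" for k
  proof (rule uniq[where Y="\<lambda>k. y (t k)" and lam=lam and Y'="\<lambda>k. ?f (t k)", OF _ _ _ _ k])
    show "\<And>j. j < n - 2 \<Longrightarrow> eqn mu Q r lam (\<lambda>k. y (t k)) j" using ysol unfolding is_sol_iff by blast
    show "\<And>j. j < n - 2 \<Longrightarrow> eqn mu Q r lam (\<lambda>k. ?f (t k)) j" using is_sol_fsol unfolding is_sol_iff by blast
    show "y (t r) = ?f (t r)" using ya fa a_eq by simp
    show "y (t (Suc r)) = ?f (t (Suc r))" using y1 fa1 by simp
  qed
  show "y = ?f"
  proof
    fix s show "y s = ?f s"
    proof (cases "s \<in> T")
      case True
      then obtain k where "k < n" "s = t k" using tsn_surj[OF fin] by blast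
      then show ?thesis using eq by simp
    next
      case False then show ?thesis using yoff by (simp add: fsol_def)
    qed
  qed
qed

definition "XC = seqP mu Q r 1 1"
definition "XS = seqP mu Q r 0 [:complex_of_real (mu r):]"

lemma solC_eq: "solC T a q lam = fsol XC lam"
  unfolding solC_def sol_the XC_def by (simp add: one_pCons)

lemma solS_eq: "solS T a q lam = fsol XS lam"
  unfolding solS_def sol_the XS_def by simp

end

context bvp
begin

sublocale W: wr XC XS r n "alF mu" "beF mu" "cF mu" "gF mu Q" "alB mu" "beB mu" "cB mu" "gB mu Q"
  "complex_of_real (mu r)"
  apply unfold_locales
  apply (unfold XC_def XS_def)
  apply (erule seqP_F)
  apply (erule seqP_F)
  apply (erule seqP_B)
  apply (erule seqP_B)
  apply (rule seqP_r)
  apply (rule seqP_r1)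
  apply (rule seqP_r)
  apply (rule seqP_r1)
  apply (rule rn)
  done

lemma bfv_cong: "(\<And>k. k < n \<Longrightarrow> Y k = Y' k) \<Longrightarrow> bfv c11 c12 c21 c22 Y = bfv c11 c12 c21 c22 Y'"
  unfolding bfv_def using n3 by simp

lemma mu0: "mu 0 \<noteq> 0" using mu_nz[of 0] n3 by simp
lemma mun2: "mu (n-2) \<noteq> 0" using mu_nz[of "n-2"] n3 by simp

lemma bfv_lin: "bfv c11 c12 c21 c22 (\<lambda>k. c0 * Y k + c1 * Y' k) = c0 * bfv c11 c12 c21 c22 Y + c1 * bfv c11 c12 c21 c22 Y'"
  unfolding bfv_def using mu0 mun2 by (simp add: field_simps)

lemma solC_t: "k < n \<Longrightarrow> solC T a q lam (t k) = poly (XC k) lam"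
  unfolding solC_eq by (rule fsol_t)
lemma solS_t: "k < n \<Longrightarrow> solS T a q lam (t k) = poly (XS k) lam"
  unfolding solS_eq by (rule fsol_t)

lemma eqnC: "j < n - 2 \<Longrightarrow> eqn mu Q r lam (\<lambda>k. poly (XC k) lam) j"
  unfolding XC_def by (rule seqP_eqn) (use mu_nz in auto)
lemma eqnS: "j < n - 2 \<Longrightarrow> eqn mu Q r lam (\<lambda>k. poly (XS k) lam) j"
  unfolding XS_def by (rule seqP_eqn) (use mu_nz in auto)

lemma XC_r: "poly (XC r) lam = 1" "poly (XC (Suc r)) lam = 1"
  using W.Xr W.Xr1 by auto
lemma XS_r: "poly (XS r) lam = 0" "poly (XS (Suc r)) lam = complex_of_real (mu r)"
  using W.Sr W.Sr1 by auto

abbreviation "Cv lam \<equiv> (\<lambda>k. poly (XC k) lam)"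
abbreviation "Sv lam \<equiv> (\<lambda>k. poly (XS k) lam)"

lemma char_fun_eq: "char_fun T a q a11 a12 a21 a22 b11 b12 b21 b22 lam =
   bfv a11 a12 a21 a22 (Cv lam) * bfv b11 b12 b21 b22 (Sv lam) - bfv b11 b12 b21 b22 (Cv lam) * bfv a11 a12 a21 a22 (Sv lam)"
proof -
  have C: "bfv c11 c12 c21 c22 (\<lambda>k. solC T a q lam (t k)) = bfv c11 c12 c21 c22 (Cv lam)" for c11 c12 c21 c22
    by (rule bfv_cong) (simp add: solC_t)
  have S: "bfv c11 c12 c21 c22 (\<lambda>k. solS T a q lam (t k)) = bfv c11 c12 c21 c22 (Sv lam)" for c11 c12 c21 c22
    by (rule bfv_cong) (simp add: solS_t)
  show ?thesis unfolding char_fun_def bform_eq C S ..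
qed

lemma eig_iff: "is_eigenvalue T a q a11 a12 a21 a22 b11 b12 b21 b22 lam \<longleftrightarrow>
   char_fun T a q a11 a12 a21 a22 b11 b12 b21 b22 lam = 0"
proof
  assume "is_eigenvalue T a q a11 a12 a21 a22 b11 b12 b21 b22 lam"
  then obtain y s0 where s0: "s0 \<in> T" "y s0 \<noteq> 0" and ys: "is_sol T a q lam y"
    and U: "bform T a11 a12 a21 a22 y = 0" and V: "bform T b11 b12 b21 b22 y = 0"
    unfolding is_eigenvalue_def by blast
  define Y where "Y = (\<lambda>k. y (t k))"
  define c0 where "c0 = Y r"
  define c1 where "c1 = (Y (Suc r) - Y r) / complex_of_real (mu r)"
  define Z where "Z = (\<lambda>k. c0 * Cv lam k + c1 * Sv lam k)"
  have mr: "complex_of_real (mu r) \<noteq> 0" using mu_nz[of r] rn by simp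
  have YZ: "Y k = Z k" if "k < n" for k
  proof (rule uniq[where Y=Y and Y'=Z and lam=lam, OF _ _ _ _ that])
    show "\<And>j. j < n - 2 \<Longrightarrow> eqn mu Q r lam Y j" using ys unfolding is_sol_iff Y_def by blast
    show "\<And>j. j < n - 2 \<Longrightarrow> eqn mu Q r lam Z j" unfolding Z_def by (intro eqn_lin eqnC eqnS)
    show "Y r = Z r" unfolding Z_def c0_def using XC_r XS_r by simp
    show "Y (Suc r) = Z (Suc r)" unfolding Z_def c0_def c1_def using XC_r XS_r mr by (simp add: field_simps)
  qed
  have bZ: "bfv c11 c12 c21 c22 Y = c0 * bfv c11 c12 c21 c22 (Cv lam) + c1 * bfv c11 c12 c21 c22 (Sv lam)" for c11 c12 c21 c22
  proof -
    have "bfv c11 c12 c21 c22 Y = bfv c11 c12 c21 c22 Z" by (rule bfv_cong) (rule YZ)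
    then show ?thesis unfolding Z_def bfv_lin .
  qed
  have nz: "c0 \<noteq> 0 \<or> c1 \<noteq> 0"
  proof (rule ccontr)
    assume "\<not> (c0 \<noteq> 0 \<or> c1 \<noteq> 0)"
    then have "c0 = 0" "c1 = 0" by auto
    obtain k where k: "k < n" "s0 = t k" using tsn_surj[OF fin s0(1)] by blast
    have "y s0 = Z k" using YZ[OF k(1)] k unfolding Y_def by simp
    also have "\<dots> = 0" unfolding Z_def using \<open>c0 = 0\<close> \<open>c1 = 0\<close> by simp
    finally show False using s0 by simp
  qed
  show "char_fun T a q a11 a12 a21 a22 b11 b12 b21 b22 lam = 0"
    unfolding char_fun_eq
    by (rule det2[OF _ _ nz]) (use U V bZ in \<open>simp_all add: bform_eq Y_def[symmetric]\<close>)
next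
  assume "char_fun T a q a11 a12 a21 a22 b11 b12 b21 b22 lam = 0"
  then have "bfv a11 a12 a21 a22 (Cv lam) * bfv b11 b12 b21 b22 (Sv lam) - bfv b11 b12 b21 b22 (Cv lam) * bfv a11 a12 a21 a22 (Sv lam) = 0"
    unfolding char_fun_eq .
  from det2_conv[OF this] obtain c0 c1 where nz: "c0 \<noteq> 0 \<or> c1 \<noteq> 0"
    and u: "c0 * bfv a11 a12 a21 a22 (Cv lam) + c1 * bfv a11 a12 a21 a22 (Sv lam) = 0"
    and v: "c0 * bfv b11 b12 b21 b22 (Cv lam) + c1 * bfv b11 b12 b21 b22 (Sv lam) = 0"
    by blast
  define y where "y = (\<lambda>s. c0 * solC T a q lam s + c1 * solS T a q lam s)"
  have yt: "y (t k) = c0 * Cv lam k + c1 * Sv lam k" if "k < n" for k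
    unfolding y_def using solC_t[OF that] solS_t[OF that] by simp
  have sol: "is_sol T a q lam y"
    unfolding is_sol_iff
  proof (intro allI impI)
    fix j assume j: "j < n - 2"
    have E: "eqn mu Q r lam (\<lambda>k. c0 * Cv lam k + c1 * Sv lam k) j" by (intro eqn_lin eqnC eqnS j)
    have C: "\<And>k. k < n \<Longrightarrow> c0 * Cv lam k + c1 * Sv lam k = y (t k)" using yt by simp
    show "eqn mu Q r lam (\<lambda>k. y (t k)) j" by (rule eqn_cong[OF C j E])
  qed
  have bf: "bform T c11 c12 c21 c22 y = c0 * bfv c11 c12 c21 c22 (Cv lam) + c1 * bfv c11 c12 c21 c22 (Sv lam)" for c11 c12 c21 c22
  proof -
    have "bform T c11 c12 c21 c22 y = bfv c11 c12 c21 c22 (\<lambda>k. c0 * Cv lam k + c1 * Sv lam k)"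
      unfolding bform_eq by (rule bfv_cong) (rule yt)
    then show ?thesis unfolding bfv_lin .
  qed
  have ex: "\<exists>s\<in>T. y s \<noteq> 0"
  proof (cases "c0 = 0")
    case False
    have "y (t r) = c0" using yt[of r] rn XC_r XS_r by simp
    moreover have "t r \<in> T" using tsn_in[OF fin, of r] rn by simp
    ultimately show ?thesis using False by (intro bexI[of _ "t r"]) auto
  next
    case True
    then have "c1 \<noteq> 0" using nz by simp
    have "y (t (Suc r)) = c1 * complex_of_real (mu r)" using yt[of "Suc r"] rn XC_r XS_r True by simp
    moreover have "complex_of_real (mu r) \<noteq> 0" using mu_nz[of r] rn by simp
    moreover have "t (Suc r) \<in> T" using tsn_in[OF fin, of "Suc r"] rn by simp
    ultimately show ?thesis using \<open>c1 \<noteq> 0\<close> by (intro bexI[of _ "t (Suc r)"]) auto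
  qed
  show "is_eigenvalue T a q a11 a12 a21 a22 b11 b12 b21 b22 lam"
    unfolding is_eigenvalue_def
    by (intro exI[of _ y] conjI ex sol) (simp_all only: bf u v)
qed

end

lemma sum_order_eq_degree:
  fixes p :: "complex poly" assumes "p \<noteq> 0"
  shows "(\<Sum>x\<in>{x. poly p x = 0}. order x p) = degree p"
proof -
  have "degree p = size (proots p)" by (simp add: size_proots_complex)
  also have "\<dots> = sum (count (proots p)) (set_mset (proots p))" by (rule size_multiset_overloaded_eq)
  also have "\<dots> = (\<Sum>x\<in>{x. poly p x = 0}. order x p)" using assms by simp
  finally show ?thesis by simp
qed

context bvp
begin

definition "cA1 c11 c12 = complex_of_real c11 - complex_of_real c12 / complex_of_real (mu 0)"
definition "cA2 c12 = complex_of_real c12 / complex_of_real (mu 0)"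
definition "cA3 c21 c22 = complex_of_real c21 - complex_of_real c22 / complex_of_real (mu (n-2))"
definition "cA4 c22 = complex_of_real c22 / complex_of_real (mu (n-2))"
definition "bfP c11 c12 c21 c22 P = smult (cA1 c11 c12) (P 0) + smult (cA2 c12) (P 1)
   + smult (cA3 c21 c22) (P (n-2)) + smult (cA4 c22) (P (n-1))"

lemma poly_bfP: "poly (bfP c11 c12 c21 c22 P) lam = bfv c11 c12 c21 c22 (\<lambda>k. poly (P k) lam)"
  unfolding bfP_def bfv_def cA1_def cA2_def cA3_def cA4_def using mu0 mun2 by (simp add: field_simps)

definition "DP a11 a12 a21 a22 b11 b12 b21 b22 =
  bfP a11 a12 a21 a22 XC * bfP b11 b12 b21 b22 XS - bfP b11 b12 b21 b22 XC * bfP a11 a12 a21 a22 XS"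

lemma poly_DP: "poly (DP a11 a12 a21 a22 b11 b12 b21 b22) lam = char_fun T a q a11 a12 a21 a22 b11 b12 b21 b22 lam"
  unfolding DP_def char_fun_eq by (simp add: poly_bfP)

lemma char_poly_eq: "char_poly T a q a11 a12 a21 a22 b11 b12 b21 b22 = DP a11 a12 a21 a22 b11 b12 b21 b22"
  unfolding char_poly_def
proof (rule the_equality)
  show "\<forall>lam. poly (DP a11 a12 a21 a22 b11 b12 b21 b22) lam = char_fun T a q a11 a12 a21 a22 b11 b12 b21 b22 lam"
    by (simp add: poly_DP)
  fix p assume "\<forall>lam. poly p lam = char_fun T a q a11 a12 a21 a22 b11 b12 b21 b22 lam"
  then have "poly p = poly (DP a11 a12 a21 a22 b11 b12 b21 b22)" by (simp add: poly_DP fun_eq_iff)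
  then show "p = DP a11 a12 a21 a22 b11 b12 b21 b22" by (simp add: poly_eq_poly_eq_iff)
qed

lemma DP_deg:
  "degree (DP a11 a12 a21 a22 b11 b12 b21 b22) \<le> n - 2 \<and>
   coeff (DP a11 a12 a21 a22 b11 b12 b21 b22) (n-2) =
     (cA1 a11 a12 * cA4 b22 - cA4 a22 * cA1 b11 b12) * coeff (W.D 0 (n-1)) (n-2)"
proof -
  define A1 where "A1 = cA1 a11 a12"
  define A2 where "A2 = cA2 a12"
  define A3 where "A3 = cA3 a21 a22"
  define A4 where "A4 = cA4 a22"
  define B1 where "B1 = cA1 b11 b12"
  define B2 where "B2 = cA2 b12"
  define B3 where "B3 = cA3 b21 b22"
  define B4 where "B4 = cA4 b22"
  let ?m = "n - 2" and ?l = "n - 1"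
  have "DP a11 a12 a21 a22 b11 b12 b21 b22 =
     ([:A1:]*XC 0 + [:A2:]*XC 1 + [:A3:]*XC ?m + [:A4:]*XC ?l) * ([:B1:]*XS 0 + [:B2:]*XS 1 + [:B3:]*XS ?m + [:B4:]*XS ?l)
   - ([:B1:]*XC 0 + [:B2:]*XC 1 + [:B3:]*XC ?m + [:B4:]*XC ?l) * ([:A1:]*XS 0 + [:A2:]*XS 1 + [:A3:]*XS ?m + [:A4:]*XS ?l)"
    unfolding DP_def bfP_def A1_def A2_def A3_def A4_def B1_def B2_def B3_def B4_def by simp
  also have "\<dots> = ([:A1:]*[:B2:] - [:A2:]*[:B1:])*(XC 0*XS 1 - XC 1*XS 0) + ([:A1:]*[:B3:] - [:A3:]*[:B1:])*(XC 0*XS ?m - XC ?m*XS 0)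
     + ([:A1:]*[:B4:] - [:A4:]*[:B1:])*(XC 0*XS ?l - XC ?l*XS 0)
     + ([:A2:]*[:B3:] - [:A3:]*[:B2:])*(XC 1*XS ?m - XC ?m*XS 1) + ([:A2:]*[:B4:] - [:A4:]*[:B2:])*(XC 1*XS ?l - XC ?l*XS 1)
     + ([:A3:]*[:B4:] - [:A4:]*[:B3:])*(XC ?m*XS ?l - XC ?l*XS ?m)"
    by (rule quad)
  also have "\<dots> = smult (A1*B2 - A2*B1) (W.D 0 1) + smult (A1*B3 - A3*B1) (W.D 0 ?m)
     + smult (A1*B4 - A4*B1) (W.D 0 ?l) + smult (A2*B3 - A3*B2) (W.D 1 ?m)
     + smult (A2*B4 - A4*B2) (W.D 1 ?l) + smult (A3*B4 - A4*B3) (W.D ?m ?l)"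
    unfolding W.D_def by (simp add: mult.commute)
  finally have eq: "DP a11 a12 a21 a22 b11 b12 b21 b22 = smult (A1*B2 - A2*B1) (W.D 0 1) + smult (A1*B3 - A3*B1) (W.D 0 ?m)
     + smult (A1*B4 - A4*B1) (W.D 0 ?l) + smult (A2*B3 - A3*B2) (W.D 1 ?m)
     + smult (A2*B4 - A4*B2) (W.D 1 ?l) + smult (A3*B4 - A4*B3) (W.D ?m ?l)" .
  have n3': "1 \<le> n - 2" "n - 2 < n" "n - 1 < n" "0 < n" "1 < n" using n3 by auto
  have d1: "degree (W.D 0 1) \<le> n - 3" by (rule W.Dall) (use n3 in auto)
  have d2: "degree (W.D 0 ?m) \<le> n - 3" by (rule W.Dall) (use n3 in auto)
  have d4: "degree (W.D 1 ?m) \<le> n - 3" by (rule W.Dall) (use n3 in auto)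
  have d5: "degree (W.D 1 ?l) \<le> n - 3" by (rule W.Dall) (use n3 in auto)
  have d6: "degree (W.D ?m ?l) \<le> n - 3" by (rule W.Dall) (use n3 in auto)
  have d3: "degree (W.D 0 ?l) \<le> n - 2" using W.D0 by blast
  have le: "n - 3 \<le> n - 2" by simp
  have z: "coeff (smult c (W.D i j)) (n-2) = 0" if "degree (W.D i j) \<le> n - 3" for c i j
  proof -
    have "coeff (W.D i j) (n-2) = 0" using that n3 by (intro coeff_eq_0) linarith
    then show ?thesis by simp
  qed
  have dg: "degree (smult c p) \<le> n - 2" if "degree p \<le> n - 2" for c and p :: "complex poly"
    using degree_smult_le[of c p] that by linarith
  have "degree (DP a11 a12 a21 a22 b11 b12 b21 b22) \<le> n - 2"
    unfolding eq
    by (intro degree_add_le dg d3 order.trans[OF d1 le] order.trans[OF d2 le] order.trans[OF d4 le]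
        order.trans[OF d5 le] order.trans[OF d6 le])
  moreover have "coeff (DP a11 a12 a21 a22 b11 b12 b21 b22) (n-2) = (A1*B4 - A4*B1) * coeff (W.D 0 ?l) (n-2)"
    unfolding eq coeff_add z[OF d1] z[OF d2] z[OF d4] z[OF d5] z[OF d6] by simp
  ultimately show ?thesis unfolding A1_def A4_def B1_def B4_def by simp
qed

lemma lc_nz: "coeff (W.D 0 (n-1)) (n-2) \<noteq> 0"
proof -
  have "coeff (W.D 0 (n-1)) (n-2) = (\<Prod>i<r. beB mu (r-1-i)) * (complex_of_real (mu r) * (\<Prod>i<n-2-r. beF mu (r+i)))"
    using W.D0 by blast
  moreover have "(\<Prod>i<r. beB mu (r-1-i)) \<noteq> 0"
  proof -
    have "beB mu (r-1-i) \<noteq> 0" if "i < r" for i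
      using mu_nz[of "r-1-i"] that rn unfolding beB_def by simp
    then show ?thesis by (simp add: prod_zero_iff)
  qed
  moreover have "(\<Prod>i<n-2-r. beF mu (r+i)) \<noteq> 0"
  proof -
    have "beF mu (r+i) \<noteq> 0" if "i < n-2-r" for i
      using mu_nz[of "r+i"] mu_nz[of "Suc (r+i)"] that unfolding beF_def by simp
    then show ?thesis by (simp add: prod_zero_iff)
  qed
  moreover have "complex_of_real (mu r) \<noteq> 0" using mu_nz[of r] rn by simp
  ultimately show ?thesis by simp
qed

lemma detA_rel:
  "cA1 a11 a12 * cA4 b22 - cA4 a22 * cA1 b11 b12 =
   complex_of_real ((a11 * ts_mu T (Min T) - a12) * b22 - (b11 * ts_mu T (Min T) - b12) * a22)
     / (complex_of_real (mu 0) * complex_of_real (mu (n-2)))"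
proof -
  have "Min T = t 0" using tsn_Min[OF fin] aT by blast
  then have "ts_mu T (Min T) = mu 0" using tsmu[of 0] n3 by simp
  then show ?thesis unfolding cA1_def cA4_def using mu0 mun2 by (simp add: field_simps)
qed

end

theorem theorem2:
  fixes T :: "real set" and a :: real and m r :: nat and q :: "real \<Rightarrow> real"
    and a11 a12 a21 a22 b11 b12 b21 b22 :: real
  assumes "finite T" and "a \<in> T"
    and "card {t\<in>T. t > a} = m" and "card {t\<in>T. t < a} = r"
    and "m \<ge> 1" and "r + m \<ge> 2"
  defines "E \<equiv> {lam. is_eigenvalue T a q a11 a12 a21 a22 b11 b12 b21 b22 lam}"
    and "N \<equiv> (\<Sum>lam\<in>{lam. is_eigenvalue T a q a11 a12 a21 a22 b11 b12 b21 b22 lam}. eig_mult T a q a11 a12 a21 a22 b11 b12 b21 b22 lam)"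
    and "detA \<equiv> (a11 * ts_mu T (Min T) - a12) * b22 - (b11 * ts_mu T (Min T) - b12) * a22"
    and "n \<equiv> m + r + 1"
  shows "(detA \<noteq> 0 \<longrightarrow> finite E \<and> N = n - 2)
       \<and> (detA = 0 \<longrightarrow> finite E \<longrightarrow> N < n - 2)"
proof -
  let ?L = "{t\<in>T. t < a}" and ?G = "{t\<in>T. t > a}"
  have Tsplit: "T = ?L \<union> ({a} \<union> ?G)" using assms(2) by auto
  have fL: "finite ?L" "finite ?G" using assms(1) by auto
  have cardT: "card T = m + r + 1"
  proof -
    have "card T = card ?L + card ({a} \<union> ?G)"
      by (subst Tsplit, rule card_Un_disjoint) (use fL in auto)
    also have "card ({a} \<union> ?G) = 1 + card ?G"
    proof -
      have "{a} \<union> ?G = insert a ?G" by simp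
      moreover have "a \<notin> ?G" by simp
      ultimately show ?thesis using fL by simp
    qed
    finally show ?thesis using assms(3,4) by simp
  qed
  interpret B: bvp T a q r
    by unfold_locales (use assms cardT in auto)
  let ?p = "char_poly T a q a11 a12 a21 a22 b11 b12 b21 b22"
  have p: "?p = B.DP a11 a12 a21 a22 b11 b12 b21 b22" by (rule B.char_poly_eq)
  have Eeq: "{lam. is_eigenvalue T a q a11 a12 a21 a22 b11 b12 b21 b22 lam} = {lam. poly ?p lam = 0}"
    using B.eig_iff B.poly_DP p by auto
  have Ed: "E = {lam. poly ?p lam = 0}" unfolding E_def Eeq ..
  have Nd: "N = (\<Sum>x\<in>{x. poly ?p x = 0}. order x ?p)" unfolding N_def Eeq eig_mult_def ..
  have nn: "n = card T" unfolding n_def using cardT by simp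
  have dg: "degree ?p \<le> n - 2"
    and cf: "coeff ?p (n-2) = (B.cA1 a11 a12 * B.cA4 b22 - B.cA4 a22 * B.cA1 b11 b12) * coeff (B.W.D 0 (card T - 1)) (card T - 2)"
    using B.DP_deg[of a11 a12 a21 a22 b11 b12 b21 b22] unfolding p nn by auto
  have K: "B.cA1 a11 a12 * B.cA4 b22 - B.cA4 a22 * B.cA1 b11 b12 = complex_of_real detA / (complex_of_real (B.mu 0) * complex_of_real (B.mu (card T - 2)))"
    unfolding detA_def by (rule B.detA_rel)
  have nz0: "complex_of_real (B.mu 0) * complex_of_real (B.mu (card T - 2)) \<noteq> 0"
    using B.mu0 B.mun2 by simp
  have lc: "coeff (B.W.D 0 (card T - 1)) (card T - 2) \<noteq> 0" by (rule B.lc_nz)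
  show ?thesis
  proof (rule conjI; intro impI)
    assume dA: "detA \<noteq> 0"
    have c: "coeff ?p (n-2) \<noteq> 0" unfolding cf K using dA nz0 lc by simp
    then have pnz: "?p \<noteq> 0" by auto
    have "degree ?p = n - 2" using dg c by (meson le_antisym le_degree)
    then show "finite E \<and> N = n - 2"
      unfolding Ed Nd using poly_roots_finite[OF pnz] sum_order_eq_degree[OF pnz] by simp
  next
    assume dA: "detA = 0" and fE: "finite E"
    have pnz: "?p \<noteq> 0"
    proof
      assume "?p = 0"
      then have "E = UNIV" unfolding Ed by simp
      then show False using fE infinite_UNIV_char_0 by auto
    qed
    have c: "coeff ?p (n-2) = 0" unfolding cf K using dA by simp
    have "degree ?p \<noteq> n - 2"
    proof
      assume "degree ?p = n - 2"
      then have "lead_coeff ?p = 0" using c by simp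
      then show False using pnz by simp
    qed
    then have "degree ?p < n - 2" using dg by simp
    then show "N < n - 2" unfolding Nd using sum_order_eq_degree[OF pnz] by simp
  qed
qed

end
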